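(* For every $x\in i\mathfrak{k}^*$ and $g_1,g_2\in G$, $$\chi_x(g_2g_1)=\chi_{g_1\cdot x}(g_2)\,\chi_x(g_1).$$
   Context: $K$ is a compact connected Lie group with Lie algebra $\mathfrak{k}$, $G=K_{\mathbb{C}}$, $\mathfrak{g}=\mathbb{C}\otimes_{\mathbb{R}}\mathfrak{k}$, $i\mathfrak{k}^*$ the real space of complex-linear functionals on $\mathfrak{g}$ real on $i\mathfrak{k}$, with coadjoint $K$-action and pairing $\langle\cdot,\cdot\rangle$. Fix a Borel subgroup $B\le G$; $T=B\cap K$, $\mathfrak{t}$ its Lie algebra, $\mathfrak{a}=i\mathfrak{t}$, $A=\exp\mathfrak{a}$, $N=[B,B]$. Iwasawa decomposition $g=kan$ ($k\in K,a\in A,n\in N$ unique); write $k(g)=k$ and $\alpha(g)\in\mathfrak{a}$ with $\exp\alpha(g)=a$. $i\mathfrak{t}^*_+\subseteq i\mathfrak{k}^*$ is the closed dominant Weyl chamber; each $x\in i\mathfrak{k}^*$ is $x=h\cdot x_0$ with $h\in K$ and unique $x_0\in i\mathfrak{t}^*_+$. The extended action of $G$ on $i\mathfrak{k}^*$ is $g\cdot x:=k(gh)\cdot x_0$, and $\chi_x(g):=e^{2\langle x_0,\alpha(gh)\rangle}$; both are independent of the choice of $h$. *)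

theory Defs
  imports Complex_Main "HOL-Algebra.Group"
begin

text \<open>Parameters:
  G      : the complex group K_C (as a HOL-Algebra group),
  K      : the compact subgroup K (carrier set),
  N      : the subgroup N = [B,B],
  expA   : the exponential map from the real vector space 'a (= Lie algebra of A) into G,
  act    : the coadjoint action of K on 'v (= i k^*),
  C      : the closed dominant Weyl chamber in 'v,
  pair   : the pairing between i k^* and the Lie algebra of A.\<close>

definition iw_k :: "('g, 'm) monoid_scheme \<Rightarrow> 'g set \<Rightarrow> 'g set \<Rightarrow> ('a \<Rightarrow> 'g) \<Rightarrow> 'g \<Rightarrow> 'g" where
  "iw_k G K N expA g =
     (SOME k. k \<in> K \<and> (\<exists>a. \<exists>n\<in>N. g = k \<otimes>\<^bsub>G\<^esub> expA a \<otimes>\<^bsub>G\<^esub> n))"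

definition iw_alpha :: "('g, 'm) monoid_scheme \<Rightarrow> 'g set \<Rightarrow> 'g set \<Rightarrow> ('a \<Rightarrow> 'g) \<Rightarrow> 'g \<Rightarrow> 'a" where
  "iw_alpha G K N expA g =
     (SOME a. \<exists>k\<in>K. \<exists>n\<in>N. g = k \<otimes>\<^bsub>G\<^esub> expA a \<otimes>\<^bsub>G\<^esub> n)"

definition dom_part :: "('g \<Rightarrow> 'v \<Rightarrow> 'v) \<Rightarrow> 'g set \<Rightarrow> 'v set \<Rightarrow> 'v \<Rightarrow> 'v" where
  "dom_part act K C x = (THE x0. x0 \<in> C \<and> (\<exists>h\<in>K. x = act h x0))"

definition dom_h :: "('g \<Rightarrow> 'v \<Rightarrow> 'v) \<Rightarrow> 'g set \<Rightarrow> 'v set \<Rightarrow> 'v \<Rightarrow> 'g" where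
  "dom_h act K C x = (SOME h. h \<in> K \<and> x = act h (dom_part act K C x))"

definition ext_act where
  "ext_act G K N expA act C g x =
     act (iw_k G K N expA (g \<otimes>\<^bsub>G\<^esub> dom_h act K C x)) (dom_part act K C x)"

definition chi where
  "chi G K N expA act C (pair :: 'v \<Rightarrow> 'a \<Rightarrow> real) x g =
     exp (2 * pair (dom_part act K C x) (iw_alpha G K N expA (g \<otimes>\<^bsub>G\<^esub> dom_h act K C x)))"

definition iwasawa_setting ::
  "('g, 'm) monoid_scheme \<Rightarrow> 'g set \<Rightarrow> 'g set \<Rightarrow> ('a::real_vector \<Rightarrow> 'g)
   \<Rightarrow> ('g \<Rightarrow> 'v::real_vector \<Rightarrow> 'v) \<Rightarrow> 'v set \<Rightarrow> ('v \<Rightarrow> 'a \<Rightarrow> real) \<Rightarrow> bool" where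
  "iwasawa_setting G K N expA act C pair \<longleftrightarrow>
     group G \<and> subgroup K G \<and> subgroup N G
   \<and> range expA \<subseteq> carrier G
   \<and> inj expA
   \<and> (\<forall>a b. expA (a + b) = expA a \<otimes>\<^bsub>G\<^esub> expA b)
   \<and> (\<forall>a. \<forall>n\<in>N. inv\<^bsub>G\<^esub> (expA a) \<otimes>\<^bsub>G\<^esub> n \<otimes>\<^bsub>G\<^esub> expA a \<in> N)
   \<and> (\<forall>g\<in>carrier G. \<exists>!(k, a, n). k \<in> K \<and> n \<in> N \<and> g = k \<otimes>\<^bsub>G\<^esub> expA a \<otimes>\<^bsub>G\<^esub> n)
   \<and> (\<forall>x. act \<one>\<^bsub>G\<^esub> x = x)
   \<and> (\<forall>k1\<in>K. \<forall>k2\<in>K. \<forall>x. act (k1 \<otimes>\<^bsub>G\<^esub> k2) x = act k1 (act k2 x))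
   \<and> (\<forall>k\<in>K. linear (act k))
   \<and> (\<forall>x. \<exists>!x0. x0 \<in> C \<and> (\<exists>h\<in>K. x = act h x0))
   \<and> (\<forall>x. linear (pair x)) \<and> (\<forall>a. linear (\<lambda>x. pair x a))
   \<comment> \<open>independence of the choice of h (stated as a fact in the paper's context)\<close>
   \<and> (\<forall>x0\<in>C. \<forall>h\<in>K. \<forall>h'\<in>K. act h x0 = act h' x0 \<longrightarrow>
        (\<forall>g\<in>carrier G.
           act (iw_k G K N expA (g \<otimes>\<^bsub>G\<^esub> h)) x0 = act (iw_k G K N expA (g \<otimes>\<^bsub>G\<^esub> h')) x0
         \<and> pair x0 (iw_alpha G K N expA (g \<otimes>\<^bsub>G\<^esub> h)) = pair x0 (iw_alpha G K N expA (g \<otimes>\<^bsub>G\<^esub> h'))))"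

end

theory Submission
  imports Defs
begin

lemma setting_facts:
  assumes "iwasawa_setting G K N expA act C pair"
  shows "group G" "subgroup K G" "subgroup N G" "range expA \<subseteq> carrier G"
    "\<And>a b. expA (a + b) = expA a \<otimes>\<^bsub>G\<^esub> expA b"
    "\<And>a n. n \<in> N \<Longrightarrow> inv\<^bsub>G\<^esub> (expA a) \<otimes>\<^bsub>G\<^esub> n \<otimes>\<^bsub>G\<^esub> expA a \<in> N"
    "\<And>g. g \<in> carrier G \<Longrightarrow> \<exists>!(k, a, n). k \<in> K \<and> n \<in> N \<and> g = k \<otimes>\<^bsub>G\<^esub> expA a \<otimes>\<^bsub>G\<^esub> n"
    "\<And>x. \<exists>!x0. x0 \<in> C \<and> (\<exists>h\<in>K. x = act h x0)"
    "\<And>x. linear (pair x)"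
    "\<And>x0 h h' g. x0 \<in> C \<Longrightarrow> h \<in> K \<Longrightarrow> h' \<in> K \<Longrightarrow> act h x0 = act h' x0 \<Longrightarrow> g \<in> carrier G \<Longrightarrow>
        pair x0 (iw_alpha G K N expA (g \<otimes>\<^bsub>G\<^esub> h)) = pair x0 (iw_alpha G K N expA (g \<otimes>\<^bsub>G\<^esub> h'))"
proof -
  note D = assms[unfolded iwasawa_setting_def]
  show "group G" "subgroup K G" "subgroup N G" "range expA \<subseteq> carrier G" using D by simp_all
  show "\<And>a b. expA (a + b) = expA a \<otimes>\<^bsub>G\<^esub> expA b" using D by simp
  show "\<And>a n. n \<in> N \<Longrightarrow> inv\<^bsub>G\<^esub> (expA a) \<otimes>\<^bsub>G\<^esub> n \<otimes>\<^bsub>G\<^esub> expA a \<in> N" using D by simp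
  show "\<And>g. g \<in> carrier G \<Longrightarrow> \<exists>!(k, a, n). k \<in> K \<and> n \<in> N \<and> g = k \<otimes>\<^bsub>G\<^esub> expA a \<otimes>\<^bsub>G\<^esub> n"
    using D by (elim conjE) (rule bspec)
  show "\<And>x. \<exists>!x0. x0 \<in> C \<and> (\<exists>h\<in>K. x = act h x0)" using D by (elim conjE) (erule allE)
  show "\<And>x. linear (pair x)" using D by simp
  show "\<And>x0 h h' g. x0 \<in> C \<Longrightarrow> h \<in> K \<Longrightarrow> h' \<in> K \<Longrightarrow> act h x0 = act h' x0 \<Longrightarrow> g \<in> carrier G \<Longrightarrow>
        pair x0 (iw_alpha G K N expA (g \<otimes>\<^bsub>G\<^esub> h)) = pair x0 (iw_alpha G K N expA (g \<otimes>\<^bsub>G\<^esub> h'))"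
  proof -
    fix x0 h h' g assume a: "x0 \<in> C" "h \<in> K" "h' \<in> K" "act h x0 = act h' x0" "g \<in> carrier G"
    have L: "\<forall>x0\<in>C. \<forall>h\<in>K. \<forall>h'\<in>K. act h x0 = act h' x0 \<longrightarrow>
        (\<forall>g\<in>carrier G.
           act (iw_k G K N expA (g \<otimes>\<^bsub>G\<^esub> h)) x0 = act (iw_k G K N expA (g \<otimes>\<^bsub>G\<^esub> h')) x0
         \<and> pair x0 (iw_alpha G K N expA (g \<otimes>\<^bsub>G\<^esub> h)) = pair x0 (iw_alpha G K N expA (g \<otimes>\<^bsub>G\<^esub> h')))"
      using D by (elim conjE)
    show "pair x0 (iw_alpha G K N expA (g \<otimes>\<^bsub>G\<^esub> h)) = pair x0 (iw_alpha G K N expA (g \<otimes>\<^bsub>G\<^esub> h'))"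
      using L a by blast
  qed
qed

lemma iw_unique:
  assumes S: "iwasawa_setting G K N expA act C pair"
    and g: "g \<in> carrier G" and k: "k \<in> K" and n: "n \<in> N"
    and eq: "g = k \<otimes>\<^bsub>G\<^esub> expA a \<otimes>\<^bsub>G\<^esub> n"
  shows "iw_k G K N expA g = k" "iw_alpha G K N expA g = a"
proof -
  note U = setting_facts(7)[OF S g]
  have uniq: "\<And>k' a' n'. k' \<in> K \<Longrightarrow> n' \<in> N \<Longrightarrow> g = k' \<otimes>\<^bsub>G\<^esub> expA a' \<otimes>\<^bsub>G\<^esub> n'
     \<Longrightarrow> k' = k \<and> a' = a \<and> n' = n"
  proof -
    fix k' a' n' assume "k' \<in> K" "n' \<in> N" "g = k' \<otimes>\<^bsub>G\<^esub> expA a' \<otimes>\<^bsub>G\<^esub> n'"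
    then have P1: "(\<lambda>(k, a, n). k \<in> K \<and> n \<in> N \<and> g = k \<otimes>\<^bsub>G\<^esub> expA a \<otimes>\<^bsub>G\<^esub> n) (k', a', n')" by simp
    have P2: "(\<lambda>(k, a, n). k \<in> K \<and> n \<in> N \<and> g = k \<otimes>\<^bsub>G\<^esub> expA a \<otimes>\<^bsub>G\<^esub> n) (k, a, n)" using k n eq by simp
    have "(k', a', n') = (k, a, n)"
      using the1_equality[OF U P1] the1_equality[OF U P2] by simp
    then show "k' = k \<and> a' = a \<and> n' = n" by simp
  qed
  have "\<exists>k'. k' \<in> K \<and> (\<exists>a. \<exists>n\<in>N. g = k' \<otimes>\<^bsub>G\<^esub> expA a \<otimes>\<^bsub>G\<^esub> n)"
    using k n eq by blast
  from someI_ex[OF this] obtain a' n' where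
    "iw_k G K N expA g \<in> K" "n' \<in> N" "g = iw_k G K N expA g \<otimes>\<^bsub>G\<^esub> expA a' \<otimes>\<^bsub>G\<^esub> n'"
    unfolding iw_k_def by blast
  then show "iw_k G K N expA g = k" using uniq by blast
  have "\<exists>a'. \<exists>k\<in>K. \<exists>n\<in>N. g = k \<otimes>\<^bsub>G\<^esub> expA a' \<otimes>\<^bsub>G\<^esub> n"
    using k n eq by blast
  from someI_ex[OF this] obtain k' n' where
    "k' \<in> K" "n' \<in> N" "g = k' \<otimes>\<^bsub>G\<^esub> expA (iw_alpha G K N expA g) \<otimes>\<^bsub>G\<^esub> n'"
    unfolding iw_alpha_def by blast
  then show "iw_alpha G K N expA g = a" using uniq by blast
qed

lemma iw_exists:
  assumes S: "iwasawa_setting G K N expA act C pair" and g: "g \<in> carrier G"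
  shows "\<exists>k a n. k \<in> K \<and> n \<in> N \<and> g = k \<otimes>\<^bsub>G\<^esub> expA a \<otimes>\<^bsub>G\<^esub> n"
  using setting_facts(7)[OF S g] by auto

lemma dom_facts:
  assumes S: "iwasawa_setting G K N expA act C pair"
  shows "dom_part act K C x \<in> C" "dom_h act K C x \<in> K"
    "x = act (dom_h act K C x) (dom_part act K C x)"
    "\<And>x0 h. x0 \<in> C \<Longrightarrow> h \<in> K \<Longrightarrow> x = act h x0 \<Longrightarrow> dom_part act K C x = x0"
proof -
  note E = setting_facts(8)[OF S, of x]
  have P: "dom_part act K C x \<in> C \<and> (\<exists>h\<in>K. x = act h (dom_part act K C x))"
    unfolding dom_part_def by (rule theI'[OF E])
  then show "dom_part act K C x \<in> C" by blast
  have "dom_h act K C x \<in> K \<and> x = act (dom_h act K C x) (dom_part act K C x)"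
    unfolding dom_h_def by (rule someI_ex) (use P in blast)
  then show "dom_h act K C x \<in> K" "x = act (dom_h act K C x) (dom_part act K C x)" by blast+
  show "\<And>x0 h. x0 \<in> C \<Longrightarrow> h \<in> K \<Longrightarrow> x = act h x0 \<Longrightarrow> dom_part act K C x = x0"
    using E P by blast
qed

theorem mainTheorem3:
  fixes G :: "('g, 'm) monoid_scheme" and K N :: "'g set" and expA :: "'a::real_vector \<Rightarrow> 'g"
    and act :: "'g \<Rightarrow> 'v::real_vector \<Rightarrow> 'v" and C :: "'v set" and pair :: "'v \<Rightarrow> 'a \<Rightarrow> real"
    and x :: 'v and g1 g2 :: 'g
  assumes "iwasawa_setting G K N expA act C pair"
    and "g1 \<in> carrier G" and "g2 \<in> carrier G"
  shows "chi G K N expA act C pair x (g2 \<otimes>\<^bsub>G\<^esub> g1)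
         = chi G K N expA act C pair (ext_act G K N expA act C g1 x) g2
           * chi G K N expA act C pair x g1"
proof -
  note S = assms(1) and g1 = assms(2) and g2 = assms(3)
  interpret G: group G using setting_facts(1)[OF S] .
  have KG: "K \<subseteq> carrier G" using setting_facts(2)[OF S] subgroup.subset by blast
  have NG: "N \<subseteq> carrier G" using setting_facts(3)[OF S] subgroup.subset by blast
  have EA: "\<And>a. expA a \<in> carrier G" using setting_facts(4)[OF S] by blast
  define x0 where "x0 = dom_part act K C x"
  define h where "h = dom_h act K C x"
  have x0C: "x0 \<in> C" and hK: "h \<in> K" and xh: "x = act h x0"
    using dom_facts[OF S, of x] unfolding x0_def h_def by auto
  have hG: "h \<in> carrier G" using hK KG by blast
  obtain k1 a1 n1 where k1: "k1 \<in> K" and n1: "n1 \<in> N" and e1: "g1 \<otimes>\<^bsub>G\<^esub> h = k1 \<otimes>\<^bsub>G\<^esub> expA a1 \<otimes>\<^bsub>G\<^esub> n1"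
    using iw_exists[OF S, of "g1 \<otimes>\<^bsub>G\<^esub> h"] g1 hG by blast
  have ik1: "iw_k G K N expA (g1 \<otimes>\<^bsub>G\<^esub> h) = k1" and ia1: "iw_alpha G K N expA (g1 \<otimes>\<^bsub>G\<^esub> h) = a1"
    using iw_unique[OF S _ k1 n1 e1] g1 hG by auto
  define y where "y = ext_act G K N expA act C g1 x"
  have y: "y = act k1 x0" unfolding y_def ext_act_def using ik1 x0_def h_def by simp
  have k1G: "k1 \<in> carrier G" using k1 KG by blast
  have yx0: "dom_part act K C y = x0" using dom_facts(4)[OF S x0C k1 y] .
  define h' where "h' = dom_h act K C y"
  have h'K: "h' \<in> K" and yh': "y = act h' x0"
    using dom_facts[OF S, of y] yx0 unfolding h'_def by auto
  have chiy: "chi G K N expA act C pair y g2 = exp (2 * pair x0 (iw_alpha G K N expA (g2 \<otimes>\<^bsub>G\<^esub> k1)))"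
    unfolding chi_def yx0 h'_def[symmetric]
    using setting_facts(10)[OF S x0C h'K k1 _ g2] yh' y by simp
  obtain k2 a2 n2 where k2: "k2 \<in> K" and n2: "n2 \<in> N" and e2: "g2 \<otimes>\<^bsub>G\<^esub> k1 = k2 \<otimes>\<^bsub>G\<^esub> expA a2 \<otimes>\<^bsub>G\<^esub> n2"
    using iw_exists[OF S, of "g2 \<otimes>\<^bsub>G\<^esub> k1"] g2 k1G by blast
  have ia2: "iw_alpha G K N expA (g2 \<otimes>\<^bsub>G\<^esub> k1) = a2"
    using iw_unique[OF S _ k2 n2 e2] g2 k1G by auto
  define n' where "n' = inv\<^bsub>G\<^esub> (expA a1) \<otimes>\<^bsub>G\<^esub> n2 \<otimes>\<^bsub>G\<^esub> expA a1 \<otimes>\<^bsub>G\<^esub> n1"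
  have n'N: "n' \<in> N" unfolding n'_def
    using subgroup.m_closed[OF setting_facts(3)[OF S] setting_facts(6)[OF S n2, of a1] n1] .
  have k2G: "k2 \<in> carrier G" using k2 KG by blast
  have n1G: "n1 \<in> carrier G" and n2G: "n2 \<in> carrier G" using n1 n2 NG by auto
  have e3: "g2 \<otimes>\<^bsub>G\<^esub> g1 \<otimes>\<^bsub>G\<^esub> h = k2 \<otimes>\<^bsub>G\<^esub> expA (a2 + a1) \<otimes>\<^bsub>G\<^esub> n'"
  proof -
    have "g2 \<otimes>\<^bsub>G\<^esub> g1 \<otimes>\<^bsub>G\<^esub> h = g2 \<otimes>\<^bsub>G\<^esub> (k1 \<otimes>\<^bsub>G\<^esub> expA a1 \<otimes>\<^bsub>G\<^esub> n1)"
      using e1 g1 g2 hG by (simp add: G.m_assoc)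
    also have "\<dots> = (g2 \<otimes>\<^bsub>G\<^esub> k1) \<otimes>\<^bsub>G\<^esub> expA a1 \<otimes>\<^bsub>G\<^esub> n1"
      using g2 k1G EA n1G by (simp add: G.m_assoc)
    also have "\<dots> = k2 \<otimes>\<^bsub>G\<^esub> expA a2 \<otimes>\<^bsub>G\<^esub> n2 \<otimes>\<^bsub>G\<^esub> expA a1 \<otimes>\<^bsub>G\<^esub> n1"
      using e2 by simp
    also have "\<dots> = k2 \<otimes>\<^bsub>G\<^esub> (expA a2 \<otimes>\<^bsub>G\<^esub> expA a1) \<otimes>\<^bsub>G\<^esub> n'"
    proof -
      have aux: "expA a1 \<otimes>\<^bsub>G\<^esub> (inv\<^bsub>G\<^esub> expA a1 \<otimes>\<^bsub>G\<^esub> z) = z" if "z \<in> carrier G" for z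
        using that EA by (simp add: G.m_assoc[symmetric] G.r_inv)
      show ?thesis unfolding n'_def using k2G EA n1G n2G
        by (simp add: G.m_assoc aux)
    qed
    finally show ?thesis using setting_facts(5)[OF S] by simp
  qed
  have ia3: "iw_alpha G K N expA (g2 \<otimes>\<^bsub>G\<^esub> g1 \<otimes>\<^bsub>G\<^esub> h) = a2 + a1"
    using iw_unique[OF S _ k2 n'N e3] g1 g2 hG by auto
  have lin: "pair x0 (a2 + a1) = pair x0 a2 + pair x0 a1"
    using setting_facts(9)[OF S, of x0] by (simp add: linear_add)
  show ?thesis
    unfolding y_def[symmetric] chiy
    unfolding chi_def x0_def[symmetric] h_def[symmetric] ia1 ia3 ia2 lin
    by (simp add: distrib_left exp_add)
qed

end
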